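(* Let $H\in\mathbb{R}^{n\times d}$ have rank $h$, $\Sigma\in\mathbb{R}^{n\times n}$ symmetric positive definite, and let $\Gamma_i$ ($i\ge0$) be the empirical covariances of deterministic EKI iterates $v_{i+1}^{(j)}=v_i^{(j)}+\Gamma_iH^\top(H\Gamma_iH^\top+\Sigma)^{-1}(y-Hv_i^{(j)})$. Let $\mathbb{M}_i=(I+\Gamma_iH^\top\Sigma^{-1}H)^{-1}$ and let $\mathbb{P},\mathbb{Q},\mathbb{N}$ be as in the context. Then for every $i\ge0$: $\mathbb{M}_i$ commutes with each of $\mathbb{P},\mathbb{Q},\mathbb{N}$; $\mathbb{P}^2=\mathbb{P}$, $\mathbb{Q}^2=\mathbb{Q}$, $\mathbb{N}^2=\mathbb{N}$; $\mathbb{P}\mathbb{Q}=\mathbb{Q}\mathbb{N}=\mathbb{P}\mathbb{N}=0$; and $\mathbb{P}+\mathbb{Q}+\mathbb{N}=I$.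
   Context: $H^+=(H^\top\Sigma^{-1}H)^\dagger H^\top\Sigma^{-1}$. Let $r$ be the number of positive eigenvalues of $H\Gamma_0H^\top w=\delta\Sigma w$, and $w_1,\dots,w_n$ a basis of $\mathbb{R}^n$ with $w_k^\top\Sigma w_l$ equal to $1$ if $k=l$, $0$ otherwise, each $w_\ell$ a generalized eigenvector of $(H\Gamma_iH^\top,\Sigma)$ for every $i\ge0$ with eigenvalue $\delta_{\ell,i}$, where $w_1,\dots,w_r\in\mathsf{Ran}(\Sigma^{-1}H)$ have positive eigenvalues, $w_{r+1},\dots,w_h\in\mathsf{Ran}(\Sigma^{-1}H)$ eigenvalue zero, $w_{h+1},\dots,w_n$ a basis of $\mathsf{Ker}(H^\top)$. Let $u_\ell=\frac1{\delta_{\ell,0}}\Gamma_0H^\top w_\ell$ ($\ell\le r$), $u_\ell=H^+\Sigma w_\ell$ ($r<\ell\le h$), $U=[u_1,\dots,u_h]$, $U_{k:l}$ its columns $k$ through $l$. $\mathbb{P}=U_{1:r}U_{1:r}^\top H^\top\Sigma^{-1}H$, $\mathbb{Q}=U_{r+1:h}U_{r+1:h}^\top H^\top\Sigma^{-1}H$, $\mathbb{N}=I-\mathbb{P}-\mathbb{Q}$. *)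

theory Defs
  imports "HOL-Analysis.Analysis"
begin

definition outer :: "real^'m \<Rightarrow> real^'k \<Rightarrow> real^'k^'m" where
  "outer x y = (\<chi> i j. x $ i * y $ j)"

definition mp_pinv :: "real^'k^'m \<Rightarrow> real^'m^'k" where
  "mp_pinv A = (THE B. A ** B ** A = A \<and> B ** A ** B = B \<and>
                        transpose (A ** B) = A ** B \<and> transpose (B ** A) = B ** A)"

definition ens_mean :: "('j::finite \<Rightarrow> real^'d) \<Rightarrow> real^'d" where
  "ens_mean v = (1 / real CARD('j)) *\<^sub>R (\<Sum>j\<in>UNIV. v j)"

definition emp_cov :: "('j::finite \<Rightarrow> real^'d) \<Rightarrow> real^'d^'d" where
  "emp_cov v = (1 / real CARD('j)) *\<^sub>R
     (\<Sum>j\<in>UNIV. outer (v j - ens_mean v) (v j - ens_mean v))"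

definition spd :: "real^'n^'n \<Rightarrow> bool" where
  "spd S \<longleftrightarrow> transpose S = S \<and> (\<forall>x. x \<noteq> 0 \<longrightarrow> x \<bullet> (S *v x) > 0)"

end

theory Submission
  imports Defs
begin

lemma dot_transpose: "(A *v x) \<bullet> y = x \<bullet> (transpose A *v y)" for A :: "real^'n^'m"
  by (metis dot_lmul_matrix inner_commute transpose_matrix_vector)

lemma dot_vmul: "(A *v z) \<bullet> x = z \<bullet> (x v* A)" for A :: "real^'n^'m"
  using dot_transpose[of A z x] by simp

lemma vec_eq_by_dot:
  fixes a b :: "real^'n"
  assumes "\<And>x. x \<bullet> a = x \<bullet> b" shows "a = b"
proof -
  have "(a - b) \<bullet> (a - b) = 0" using assms[of "a-b"] by (simp add: inner_diff_right)
  then show ?thesis by simp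
qed

lemma sym_from_dot:
  fixes X :: "real^'n^'n"
  assumes "\<And>x y. (X *v x) \<bullet> y = x \<bullet> (X *v y)"
  shows "transpose X = X"
proof -
  have "transpose X *v y = X *v y" for y
    by (rule vec_eq_by_dot) (metis assms dot_transpose)
  then show ?thesis by (simp only: matrix_eq) simp
qed

lemma inv_facts:
  fixes A :: "real^'n^'n"
  assumes "\<And>x. A *v x = 0 \<Longrightarrow> x = 0"
  shows "A ** matrix_inv A = mat 1" "matrix_inv A ** A = mat 1"
proof -
  have "invertible A" using assms matrix_left_invertible_ker invertible_left_inverse by metis
  then have "\<exists>A'. A ** A' = mat 1 \<and> A' ** A = mat 1" by (simp add: invertible_def)
  then have "A ** matrix_inv A = mat 1 \<and> matrix_inv A ** A = mat 1"
    unfolding matrix_inv_def by (rule someI_ex)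
  then show "A ** matrix_inv A = mat 1" "matrix_inv A ** A = mat 1" by auto
qed

lemma inv_sym:
  fixes S :: "real^'n^'n"
  assumes "S ** Si = mat 1" "Si ** S = mat 1" "transpose S = S"
  shows "transpose Si = Si"
proof -
  have "transpose Si ** S = mat 1"
    using assms by (metis matrix_transpose_mul transpose_mat)
  then have "transpose Si ** S ** Si = Si" by (metis matrix_mul_lid)
  then show ?thesis using assms(1) by (metis matrix_mul_assoc matrix_mul_rid)
qed

lemma outer_mulv: "outer x y *v z = (y \<bullet> z) *\<^sub>R x"
proof (rule vec_eq_iff[THEN iffD2], rule allI)
  fix i
  have "(outer x y *v z) $ i = (\<Sum>j\<in>UNIV. x $ i * (y $ j * z $ j))"
    by (simp add: outer_def matrix_vector_mult_def mult.assoc)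
  also have "\<dots> = x $ i * (\<Sum>j\<in>UNIV. y $ j * z $ j)"
    by (simp add: sum_distrib_left)
  also have "\<dots> = ((y \<bullet> z) *\<^sub>R x) $ i"
    by (simp add: inner_vec_def)
  finally show "(outer x y *v z) $ i = ((y \<bullet> z) *\<^sub>R x) $ i" .
qed

lemma sum_mulv: "(\<Sum>j\<in>S. M j) *v x = (\<Sum>j\<in>S. M j *v x)"
  by (induction S rule: infinite_finite_induct) (auto simp: matrix_vector_mult_add_rdistrib)

lemma mulv_sum: "(A::real^'n^'m) *v (\<Sum>j\<in>S. f j) = (\<Sum>j\<in>S. A *v f j)"
  by (induction S rule: infinite_finite_induct) (auto simp: matrix_vector_right_distrib)

lemma emp_cov_mulv:
  "emp_cov v *v x = (1 / real CARD('j)) *\<^sub>R (\<Sum>j\<in>UNIV. ((v j - ens_mean v) \<bullet> x) *\<^sub>R (v j - ens_mean v))"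
  for v :: "'j::finite \<Rightarrow> real^'d"
  unfolding emp_cov_def
  by (simp add: scaleR_matrix_vector_assoc[symmetric] sum_mulv outer_mulv)

lemma emp_cov_quad:
  "x \<bullet> (emp_cov v *v y) = (1 / real CARD('j)) * (\<Sum>j\<in>UNIV. ((v j - ens_mean v) \<bullet> x) * ((v j - ens_mean v) \<bullet> y))"
  for v :: "'j::finite \<Rightarrow> real^'d"
  by (simp add: emp_cov_mulv inner_sum_right mult_ac inner_commute)

lemma emp_cov_sym: "(emp_cov v *v x) \<bullet> y = x \<bullet> (emp_cov v *v y)"
  for v :: "'j::finite \<Rightarrow> real^'d"
proof -
  have "(emp_cov v *v x) \<bullet> y = y \<bullet> (emp_cov v *v x)" by (rule inner_commute)
  also have "\<dots> = x \<bullet> (emp_cov v *v y)"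
    unfolding emp_cov_quad by (simp add: mult.commute)
  finally show ?thesis .
qed

lemma emp_cov_transpose: "transpose (emp_cov v) = emp_cov v"
  for v :: "'j::finite \<Rightarrow> real^'d"
  by (rule sym_from_dot) (rule emp_cov_sym)

lemma emp_cov_psd: "x \<bullet> (emp_cov v *v x) \<ge> 0"
  for v :: "'j::finite \<Rightarrow> real^'d"
  by (simp add: emp_cov_quad sum_nonneg)

lemma emp_cov_zero:
  fixes v :: "'j::finite \<Rightarrow> real^'d"
  assumes "x \<bullet> (emp_cov v *v x) = 0" shows "emp_cov v *v x = 0"
proof -
  have "(\<Sum>j\<in>UNIV. ((v j - ens_mean v) \<bullet> x) * ((v j - ens_mean v) \<bullet> x)) = 0"
    using assms by (simp add: emp_cov_quad)
  then have "\<forall>j\<in>UNIV. ((v j - ens_mean v) \<bullet> x) * ((v j - ens_mean v) \<bullet> x) = 0"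
    by (subst (asm) sum_nonneg_eq_0_iff) auto
  then show ?thesis by (simp add: emp_cov_mulv)
qed

lemma emp_cov_affine:
  fixes v v' :: "'j::finite \<Rightarrow> real^'d"
  assumes "\<And>j. v' j = G *v v j + c"
  shows "emp_cov v' = G ** emp_cov v ** transpose G"
proof -
  have J: "real CARD('j) \<noteq> 0" by simp
  have m: "ens_mean v' = G *v ens_mean v + c"
  proof -
    have "(\<Sum>j\<in>UNIV. v' j) = G *v (\<Sum>j\<in>UNIV. v j) + real CARD('j) *\<^sub>R c"
      by (simp add: assms sum.distrib mulv_sum sum_constant_scaleR del: sum_constant)
    then show ?thesis unfolding ens_mean_def using J
      by (simp add: matrix_vector_mult_scaleR scaleR_add_right)
  qed
  have z: "v' j - ens_mean v' = G *v (v j - ens_mean v)" for j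
    by (simp add: m assms matrix_vector_mult_diff_distrib)
  show ?thesis
  proof (subst matrix_eq, intro allI)
    fix x
    have "(G ** emp_cov v ** transpose G) *v x = G *v (emp_cov v *v (transpose G *v x))"
      by (simp only: matrix_vector_mul_assoc matrix_mul_assoc)
    also have "\<dots> = emp_cov v' *v x"
      by (simp add: emp_cov_mulv z matrix_vector_mult_scaleR mulv_sum dot_vmul)
    finally show "emp_cov v' *v x = (G ** emp_cov v ** transpose G) *v x" by simp
  qed
qed


lemma pinv_unique:
  fixes A :: "real^'k^'m" and B1 B2 :: "real^'m^'k"
  assumes a1: "A ** B1 ** A = A" and b1: "B1 ** A ** B1 = B1"
    and c1: "transpose (A ** B1) = A ** B1" and d1: "transpose (B1 ** A) = B1 ** A"
    and a2: "A ** B2 ** A = A" and b2: "B2 ** A ** B2 = B2"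
    and c2: "transpose (A ** B2) = A ** B2" and d2: "transpose (B2 ** A) = B2 ** A"
  shows "B1 = B2"
proof -
  have e1: "B1 = B1 ** (A ** B1)" using b1 by (simp add: matrix_mul_assoc)
  also have "\<dots> = B1 ** (transpose B1 ** transpose A)" using c1 by (metis matrix_transpose_mul)
  finally have e1: "B1 = B1 ** (transpose B1 ** transpose A)" .
  have e2: "transpose A = transpose A ** (A ** B2)"
    using a2 c2 by (metis matrix_transpose_mul)
  have "B1 = B1 ** (transpose B1 ** (transpose A ** (A ** B2)))"
    using e1 e2 by metis
  also have "\<dots> = B1 ** (transpose B1 ** transpose A) ** (A ** B2)"
    by (simp add: matrix_mul_assoc)
  also have "\<dots> = B1 ** (A ** B2)" using e1 by metis
  finally have f1: "B1 = B1 ** A ** B2" by (simp add: matrix_mul_assoc)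
  have g1: "B2 = (B2 ** A) ** B2" using b2 by simp
  also have "\<dots> = (transpose A ** transpose B2) ** B2" using d2 by (metis matrix_transpose_mul)
  finally have g1: "B2 = (transpose A ** transpose B2) ** B2" .
  have g2: "transpose A = (B1 ** A) ** transpose A"
    using a1 d1 by (metis matrix_transpose_mul matrix_mul_assoc)
  have "B2 = (((B1 ** A) ** transpose A) ** transpose B2) ** B2"
    using g1 g2 by metis
  also have "\<dots> = (B1 ** A) ** (transpose A ** transpose B2) ** B2"
    by (simp add: matrix_mul_assoc)
  also have "\<dots> = (B1 ** A) ** B2" using g1 by (metis matrix_mul_assoc)
  finally show ?thesis using f1 by simp
qed

lemma pinv_exists_sym:
  fixes A :: "real^'n^'n"
  assumes symA: "transpose A = A"
  shows "\<exists>B. A ** B ** A = A \<and> B ** A ** B = B \<and> transpose (A ** B) = A ** B \<and> transpose (B ** A) = B ** A"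
proof -
  let ?T = "range (\<lambda>x. A *v x)"
  have sub: "subspace ?T"
    unfolding subspace_def
  proof (intro conjI ballI allI)
    show "0 \<in> ?T" by (rule image_eqI[where x=0]) simp_all
  next
    fix p q assume "p \<in> ?T" "q \<in> ?T"
    then obtain s t where "p = A *v s" "q = A *v t" by auto
    then show "p + q \<in> ?T"
      by (auto intro!: image_eqI[where x="s+t"] simp: matrix_vector_right_distrib)
  next
    fix c p assume "p \<in> ?T"
    then obtain s where "p = A *v s" by auto
    then show "c *\<^sub>R p \<in> ?T"
      by (auto intro!: image_eqI[where x="c *\<^sub>R s"] simp: matrix_vector_mult_scaleR)
  qed
  obtain Bs where Bs: "Bs \<subseteq> ?T" "pairwise orthogonal Bs" "span Bs = ?T"
    using orthogonal_basis_subspace[OF sub] by metis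
  define Pi where "Pi = (\<Sum>b\<in>Bs. (1 / (b \<bullet> b)) *\<^sub>R outer b b)"
  have Pi_v: "Pi *v x = (\<Sum>b\<in>Bs. (b \<bullet> x / (b \<bullet> b)) *\<^sub>R b)" for x
    by (simp add: Pi_def sum_mulv scaleR_matrix_vector_assoc[symmetric] outer_mulv)
  have PiT: "Pi *v x \<in> ?T" for x
  proof -
    have "(\<Sum>b\<in>Bs. (b \<bullet> x / (b \<bullet> b)) *\<^sub>R b) \<in> span Bs"
      by (intro span_sum span_scale span_base) auto
    then show ?thesis using Bs(3) Pi_v by simp
  qed
  have orth: "z \<bullet> (x - Pi *v x) = 0" if "z \<in> ?T" for z x
    using Gram_Schmidt_step[OF Bs(2), of z x] that Bs(3) Pi_v
    by (simp add: orthogonal_def)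
  have Tdiff: "a - b \<in> ?T" if "a \<in> ?T" "b \<in> ?T" for a b
    using that Bs(3) span_diff[of a Bs b] by simp
  have fixT: "Pi *v z = z" if "z \<in> ?T" for z
  proof -
    have "(z - Pi *v z) \<bullet> (z - Pi *v z) = 0"
      using orth[OF Tdiff[OF that PiT]] .
    then show ?thesis by simp
  qed
  have Akill: "A *v (x - Pi *v x) = 0" for x
  proof -
    let ?e = "A *v (x - Pi *v x)"
    have "?e \<bullet> ?e = (x - Pi *v x) \<bullet> (A *v ?e)"
      using dot_transpose[of A "x - Pi *v x" ?e] symA by simp
    also have "\<dots> = 0" using orth[of "A *v ?e" x] by (simp add: inner_commute)
    finally show ?thesis by simp
  qed
  define C where "C = A + (mat 1 - Pi)"
  have Cv: "C *v x = A *v x + (x - Pi *v x)" for x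
    by (simp add: C_def matrix_vector_mult_add_rdistrib matrix_vector_mult_diff_rdistrib)
  have Cinj: "x = 0" if "C *v x = 0" for x
  proof -
    have eq: "A *v x + (x - Pi *v x) = 0" using that Cv by simp
    have "(A *v x) \<bullet> (A *v x + (x - Pi *v x)) = 0" using eq by simp
    moreover have "(A *v x) \<bullet> (x - Pi *v x) = 0" using orth[of "A *v x" x] by simp
    ultimately have "(A *v x) \<bullet> (A *v x) = 0" by (simp add: inner_add_right)
    then have Ax: "A *v x = 0" by simp
    then have "x = Pi *v x" using eq by simp
    then have "x \<in> ?T" using PiT by metis
    then obtain z where z: "x = A *v z" by auto
    have "x \<bullet> x = z \<bullet> (A *v x)"
      using dot_transpose[of A z x] symA z by simp
    then show ?thesis using Ax by simp
  qed
  obtain Ci where Ci: "C ** Ci = mat 1" "Ci ** C = mat 1"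
    using inv_facts[of C] Cinj by blast
  have Pi_A: "Pi *v (A *v x) = A *v x" for x by (rule fixT) auto
  have A_Pi: "A *v (Pi *v x) = A *v x" for x
    using Akill[of x] by (simp add: matrix_vector_mult_diff_distrib)
  have PiPi_v: "Pi *v (Pi *v x) = Pi *v x" for x by (rule fixT[OF PiT])
  have CPi: "C ** Pi = A"
    by (simp add: matrix_eq matrix_vector_mul_assoc[symmetric] Cv A_Pi PiPi_v)
  have PiC: "Pi ** C = A"
    by (simp add: matrix_eq matrix_vector_mul_assoc[symmetric] Cv Pi_A PiPi_v
        matrix_vector_right_distrib matrix_vector_mult_diff_distrib)
  have PiPi: "Pi ** Pi = Pi"
    by (simp add: matrix_eq matrix_vector_mul_assoc[symmetric] PiPi_v)
  have PiA: "Pi ** A = A"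
    by (simp add: matrix_eq matrix_vector_mul_assoc[symmetric] Pi_A)
  have symPi: "transpose Pi = Pi"
  proof (rule sym_from_dot)
    fix x y
    have "(Pi *v x) \<bullet> y = (Pi *v x) \<bullet> (Pi *v y) + (Pi *v x) \<bullet> (y - Pi *v y)"
      by (simp add: inner_diff_right)
    also have "\<dots> = (Pi *v x) \<bullet> (Pi *v y)" using orth[OF PiT] by simp
    also have "\<dots> = (Pi *v x) \<bullet> (Pi *v y) + (x - Pi *v x) \<bullet> (Pi *v y)"
      using orth[OF PiT, of y x] by (simp add: inner_commute)
    also have "\<dots> = x \<bullet> (Pi *v y)" by (simp add: inner_diff_left)
    finally show "(Pi *v x) \<bullet> y = x \<bullet> (Pi *v y)" .
  qed
  have CiA: "Ci ** A = Pi"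
  proof -
    have "Ci ** A = Ci ** (C ** Pi)" using CPi by simp
    also have "\<dots> = (Ci ** C) ** Pi" by (rule matrix_mul_assoc)
    finally show ?thesis using Ci by simp
  qed
  have ACi: "A ** Ci = Pi"
  proof -
    have "A ** Ci = (Pi ** C) ** Ci" using PiC by simp
    also have "\<dots> = Pi ** (C ** Ci)" by (rule matrix_mul_assoc[symmetric])
    finally show ?thesis using Ci by simp
  qed
  define B where "B = Ci ** Pi"
  have AB: "A ** B = Pi"
  proof -
    have "A ** B = (A ** Ci) ** Pi" unfolding B_def by (rule matrix_mul_assoc)
    then show ?thesis using ACi PiPi by simp
  qed
  have BA: "B ** A = Pi"
  proof -
    have "B ** A = Ci ** (Pi ** A)" unfolding B_def by (rule matrix_mul_assoc[symmetric])
    then show ?thesis using CiA PiA by simp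
  qed
  have comm: "Pi ** Ci = Ci ** Pi"
  proof -
    have "Pi ** Ci = (Ci ** A) ** Ci" using CiA by simp
    also have "\<dots> = Ci ** (A ** Ci)" by (rule matrix_mul_assoc[symmetric])
    finally show ?thesis using ACi by simp
  qed
  have "A ** B ** A = A" using AB PiA by simp
  moreover have "B ** A ** B = B"
  proof -
    have "B ** A ** B = Pi ** (Ci ** Pi)" using BA unfolding B_def by simp
    also have "\<dots> = (Pi ** Ci) ** Pi" by (rule matrix_mul_assoc)
    also have "\<dots> = (Ci ** Pi) ** Pi" using comm by simp
    also have "\<dots> = Ci ** (Pi ** Pi)" by (rule matrix_mul_assoc[symmetric])
    also have "\<dots> = B" using PiPi unfolding B_def by (simp only:)
    finally show ?thesis .
  qed
  ultimately show ?thesis using AB BA symPi by (intro exI[of _ B]) simp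
qed

lemma mp_pinv_sym:
  fixes A :: "real^'n^'n"
  assumes "transpose A = A"
  shows "A ** mp_pinv A ** A = A"
proof -
  have "\<exists>!B. A ** B ** A = A \<and> B ** A ** B = B \<and> transpose (A ** B) = A ** B \<and> transpose (B ** A) = B ** A"
    using pinv_exists_sym[OF assms] pinv_unique by blast
  from theI'[OF this] show ?thesis unfolding mp_pinv_def by blast
qed


lemma transpose_add: "transpose (A + B) = transpose A + transpose B"
  by (simp add: transpose_def vec_eq_iff)

lemma transpose_diff: "transpose (A - B) = transpose A - (transpose B :: 'a::ring_1^'n^'m)"
  by (simp add: transpose_def vec_eq_iff)

declare transpose_matrix_vector[simp del] vector_transpose_matrix[simp del]

lemma mv: "A *v (B *v x) = (A ** B) *v x" by (rule matrix_vector_mul_assoc)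

lemma comm_inv:
  fixes Y Mi Z :: "real^'n^'n"
  assumes "Y ** Mi = mat 1" "Mi ** Y = mat 1" "Y ** Z = Z ** Y"
  shows "Mi ** Z = Z ** Mi"
proof -
  have "Mi ** Z = Mi ** Z ** (Y ** Mi)" using assms by simp
  also have "\<dots> = Mi ** (Z ** Y) ** Mi" by (simp add: matrix_mul_assoc)
  also have "\<dots> = (Mi ** Y) ** Z ** Mi" using assms(3) by (metis matrix_mul_assoc)
  also have "\<dots> = Z ** Mi" using assms by simp
  finally show ?thesis .
qed

lemma proj_lemma:
  fixes a u :: "nat \<Rightarrow> real^'d"
  assumes orth: "\<And>k l. k \<in> I \<Longrightarrow> l \<in> I \<Longrightarrow> a k \<bullet> u l = (if k = l then 1 else 0)"
    and K1: "K1 \<subseteq> I" and K2: "K2 \<subseteq> I" and fin: "finite K1" "finite K2"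
  shows "(\<Sum>k\<in>K1. (a k \<bullet> (\<Sum>l\<in>K2. (a l \<bullet> x) *\<^sub>R u l)) *\<^sub>R u k)
         = (\<Sum>k\<in>K1 \<inter> K2. (a k \<bullet> x) *\<^sub>R u k)"
proof -
  have eq: "a k \<bullet> (\<Sum>l\<in>K2. (a l \<bullet> x) *\<^sub>R u l) = (if k \<in> K2 then a k \<bullet> x else 0)"
    if "k \<in> K1" for k
  proof -
    have "a k \<bullet> (\<Sum>l\<in>K2. (a l \<bullet> x) *\<^sub>R u l) = (\<Sum>l\<in>K2. (a l \<bullet> x) * (a k \<bullet> u l))"
      by (simp add: inner_sum_right)
    also have "\<dots> = (\<Sum>l\<in>K2. if l = k then a k \<bullet> x else 0)"
    proof (intro sum.cong refl)
      have kI: "k \<in> I" using that K1 by auto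
      fix l assume "l \<in> K2"
      then have "l \<in> I" using K2 by auto
      then show "(a l \<bullet> x) * (a k \<bullet> u l) = (if l = k then a k \<bullet> x else 0)"
        using orth[OF kI] by auto
    qed
    also have "\<dots> = (if k \<in> K2 then a k \<bullet> x else 0)" using fin by (simp add: sum.delta)
    finally show ?thesis .
  qed
  have "(\<Sum>k\<in>K1. (a k \<bullet> (\<Sum>l\<in>K2. (a l \<bullet> x) *\<^sub>R u l)) *\<^sub>R u k)
      = (\<Sum>k\<in>K1. if k \<in> K2 then (a k \<bullet> x) *\<^sub>R u k else 0)"
    using eq by (intro sum.cong) auto
  also have "\<dots> = (\<Sum>k\<in>K1 \<inter> K2. (a k \<bullet> x) *\<^sub>R u k)"
    by (simp add: sum.inter_restrict[OF fin(1)])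
  finally show ?thesis .
qed

theorem proposition3p15:
  fixes H :: "real^'d^'n"
    and Sig :: "real^'n^'n"
    and y :: "real^'n"
    and v :: "nat \<Rightarrow> 'j::finite \<Rightarrow> real^'d"
    and w :: "nat \<Rightarrow> real^'n"
    and \<delta> :: "nat \<Rightarrow> nat \<Rightarrow> real"
    and r h :: nat
    and Sinv :: "real^'n^'n" and Hplus :: "real^'n^'d" and u :: "nat \<Rightarrow> real^'d"
    and P Q N :: "real^'d^'d" and M :: "nat \<Rightarrow> real^'d^'d"
  assumes rankH: "rank H = h"
    and Sig_spd: "spd Sig"
    and EKI: "\<And>i j. v (Suc i) j = v i j
        + (emp_cov (v i) ** transpose H
             ** matrix_inv (H ** emp_cov (v i) ** transpose H + Sig)) *v (y - H *v v i j)"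
    and w_basis: "span (w ` {1..CARD('n)}) = UNIV"
    and w_orth: "\<And>k l. k \<in> {1..CARD('n)} \<Longrightarrow> l \<in> {1..CARD('n)} \<Longrightarrow>
        w k \<bullet> (Sig *v w l) = (if k = l then 1 else 0)"
    and w_eig: "\<And>l i. l \<in> {1..CARD('n)} \<Longrightarrow>
        (H ** emp_cov (v i) ** transpose H) *v w l = \<delta> l i *\<^sub>R (Sig *v w l)"
    and r_def: "r = card {l \<in> {1..CARD('n)}. \<delta> l 0 > 0}"
    and r_le_h: "r \<le> h" and h_le_n: "h \<le> CARD('n)"
    and w_ran: "\<And>l. l \<in> {1..h} \<Longrightarrow> w l \<in> range (\<lambda>x. (matrix_inv Sig ** H) *v x)"
    and w_pos: "\<And>l. l \<in> {1..r} \<Longrightarrow> \<delta> l 0 > 0"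
    and w_zero: "\<And>l. l \<in> {r+1..h} \<Longrightarrow> \<delta> l 0 = 0"
    and w_ker: "span (w ` {h+1..CARD('n)}) = {x. transpose H *v x = 0}"
    and Sinv_def: "Sinv = matrix_inv Sig"
    and Hplus_def: "Hplus = mp_pinv (transpose H ** Sinv ** H) ** transpose H ** Sinv"
    and u_def: "u = (\<lambda>l. if l \<le> r then (1 / \<delta> l 0) *\<^sub>R ((emp_cov (v 0) ** transpose H) *v w l)
                  else Hplus *v (Sig *v w l))"
    and P_def: "P = (\<Sum>l\<in>{1..r}. outer (u l) (u l)) ** transpose H ** Sinv ** H"
    and Q_def: "Q = (\<Sum>l\<in>{r+1..h}. outer (u l) (u l)) ** transpose H ** Sinv ** H"
    and N_def: "N = mat 1 - P - Q"
    and M_def: "M = (\<lambda>i. matrix_inv (mat 1 + emp_cov (v i) ** transpose H ** Sinv ** H))"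
  shows "\<forall>i. M i ** P = P ** M i \<and> M i ** Q = Q ** M i \<and> M i ** N = N ** M i
           \<and> P ** P = P \<and> Q ** Q = Q \<and> N ** N = N
           \<and> P ** Q = 0 \<and> Q ** N = 0 \<and> P ** N = 0
           \<and> P + Q + N = mat 1"
proof -
  let ?Ht = "transpose H"
  define A where "A = ?Ht ** Sinv ** H"
  define Gam where "Gam = (\<lambda>i. emp_cov (v i))"
  define a where "a = (\<lambda>k. ?Ht *v w k)"
  have SigT: "transpose Sig = Sig" and Sigpd: "\<And>x. x \<noteq> 0 \<Longrightarrow> x \<bullet> (Sig *v x) > 0"
    using Sig_spd by (auto simp: spd_def)
  have Siginj: "x = 0" if "Sig *v x = 0" for x
    using Sigpd[of x] that by (cases "x = 0") auto
  have SS1: "Sig ** Sinv = mat 1" and SS2: "Sinv ** Sig = mat 1"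
    using inv_facts[of Sig] Siginj Sinv_def by auto
  have SinvT: "transpose Sinv = Sinv" using inv_sym[OF SS1 SS2 SigT] .
  have SigSinv: "Sig *v (Sinv *v y) = y" for y using SS1 by (simp add: mv)
  have SinvSig: "Sinv *v (Sig *v y) = y" for y using SS2 by (simp add: mv)
  have Sinv_quad: "y \<bullet> (Sinv *v y) = (Sinv *v y) \<bullet> (Sig *v (Sinv *v y))" for y
    by (simp add: SigSinv inner_commute)
  have Sinv_nonneg: "y \<bullet> (Sinv *v y) \<ge> 0" for y
    using Sinv_quad[of y] Sigpd[of "Sinv *v y"] by (cases "Sinv *v y = 0") auto
  have Sinv_zero: "y = 0" if "y \<bullet> (Sinv *v y) = 0" for y
  proof (rule ccontr)
    assume "y \<noteq> 0"
    then have "Sinv *v y \<noteq> 0" using SigSinv[of y] by auto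
    then show False using Sigpd[of "Sinv *v y"] Sinv_quad[of y] that by simp
  qed
  have dotHt: "(?Ht *v x) \<bullet> z = x \<bullet> (H *v z)" for x z
    using dot_transpose[of ?Ht x z] by simp
  have AT: "transpose A = A"
    by (simp add: A_def matrix_transpose_mul SinvT matrix_mul_assoc)
  have Av: "A *v x = ?Ht *v (Sinv *v (H *v x))" for x
    by (simp add: A_def mv matrix_mul_assoc)
  have Adot: "(A *v x) \<bullet> z = x \<bullet> (A *v z)" for x z
    using dot_transpose[of A x z] AT by simp
  have Aquad: "x \<bullet> (A *v x) = (H *v x) \<bullet> (Sinv *v (H *v x))" for x
  proof -
    have "x \<bullet> (A *v x) = (?Ht *v (Sinv *v (H *v x))) \<bullet> x" by (simp add: Av inner_commute)
    also have "\<dots> = (Sinv *v (H *v x)) \<bullet> (H *v x)" by (rule dotHt)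
    finally show ?thesis by (simp add: inner_commute)
  qed
  define B where "B = mp_pinv A"
  have ABA: "A ** B ** A = A" unfolding B_def by (rule mp_pinv_sym[OF AT])
  have HBA: "H *v (B *v (A *v x)) = H *v x" for x
  proof -
    let ?y = "B *v (A *v x) - x"
    have "A *v ?y = 0" using ABA by (simp add: matrix_vector_mult_diff_distrib mv matrix_mul_assoc)
    then have "(H *v ?y) \<bullet> (Sinv *v (H *v ?y)) = 0" using Aquad[of ?y] by simp
    then have "H *v ?y = 0" by (rule Sinv_zero)
    then show ?thesis by (simp add: matrix_vector_mult_diff_distrib)
  qed
  have n_h: "{1..h} \<subseteq> {1..CARD('n)}" using h_le_n by auto
  have wSw: "w k \<bullet> (Sig *v w l) = (if k = l then 1 else 0)" if "k \<in> {1..h}" "l \<in> {1..h}" for k l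
    using w_orth n_h that by auto
  have HplusB: "Hplus = B ** ?Ht ** Sinv" by (simp add: Hplus_def B_def A_def)
  have Hu: "H *v u k = Sig *v w k" if k: "k \<in> {1..h}" for k
  proof (cases "k \<le> r")
    case True
    then have kr: "k \<in> {1..r}" using k by auto
    have dpos: "\<delta> k 0 > 0" using w_pos kr .
    have "H *v u k = (1 / \<delta> k 0) *\<^sub>R ((H ** emp_cov (v 0) ** ?Ht) *v w k)"
      using True by (simp add: u_def matrix_vector_mult_scaleR mv matrix_mul_assoc)
    also have "\<dots> = Sig *v w k" using w_eig[of k 0] k n_h dpos by auto
    finally show ?thesis .
  next
    case False
    obtain x0 where x0: "w k = (matrix_inv Sig ** H) *v x0" using w_ran[OF k] by auto
    have Sw: "Sig *v w k = H *v x0" using x0 SS1 Sinv_def by (simp add: mv matrix_mul_assoc)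
    have "u k = B *v (A *v x0)"
      using False by (simp add: u_def HplusB Sw A_def mv matrix_mul_assoc)
    then show ?thesis using HBA Sw by simp
  qed
  have au: "a k \<bullet> u l = (if k = l then 1 else 0)" if "k \<in> {1..h}" "l \<in> {1..h}" for k l
    using dotHt[of "w k" "u l"] Hu[OF that(2)] wSw[OF that] by (simp add: a_def)
  have Au: "A *v u k = a k" if "k \<in> {1..h}" for k
    using Hu[OF that] by (simp add: Av SinvSig a_def)
  have uA: "u k \<bullet> (A *v x) = a k \<bullet> x" if "k \<in> {1..h}" for k x
    using Adot[of "u k" x] Au[OF that] by simp
  define pr where "pr = (\<lambda>K x. (\<Sum>k\<in>K. (a k \<bullet> x) *\<^sub>R u k))"
  have prcomp: "pr K1 (pr K2 x) = pr (K1 \<inter> K2) x"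
    if "K1 \<subseteq> {1..h}" "K2 \<subseteq> {1..h}" "finite K1" "finite K2" for K1 K2 x
    unfolding pr_def using proj_lemma[of "{1..h}" a u K1 K2 x] au that by blast
  have outerA: "(\<Sum>l\<in>K. outer (u l) (u l)) ** A *v x = pr K x" if "K \<subseteq> {1..h}" for K x
  proof -
    have "(\<Sum>l\<in>K. outer (u l) (u l)) ** A *v x = (\<Sum>l\<in>K. (u l \<bullet> (A *v x)) *\<^sub>R u l)"
      by (simp add: mv[symmetric] sum_mulv outer_mulv)
    also have "\<dots> = pr K x" unfolding pr_def using that uA by (intro sum.cong) auto
    finally show ?thesis .
  qed
  have Pv: "P *v x = pr {1..r} x" for x
  proof -
    have "P = (\<Sum>l\<in>{1..r}. outer (u l) (u l)) ** A" by (simp add: P_def A_def matrix_mul_assoc)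
    then show ?thesis using outerA[of "{1..r}" x] r_le_h by auto
  qed
  have Qv: "Q *v x = pr {r+1..h} x" for x
  proof -
    have "Q = (\<Sum>l\<in>{r+1..h}. outer (u l) (u l)) ** A" by (simp add: Q_def A_def matrix_mul_assoc)
    then show ?thesis using outerA[of "{r+1..h}" x] by auto
  qed
  have Nv: "N *v x = x - P *v x - Q *v x" for x
    by (simp add: N_def matrix_vector_mult_diff_rdistrib)
  have pr0: "pr {} x = 0" for x by (simp add: pr_def)
  have PPv: "P *v (P *v x) = P *v x" for x
    using prcomp[of "{1..r}" "{1..r}"] r_le_h by (simp add: Pv)
  have QQv: "Q *v (Q *v x) = Q *v x" for x
    using prcomp[of "{r+1..h}" "{r+1..h}"] by (simp add: Qv)
  have PQv: "P *v (Q *v x) = 0" for x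
  proof -
    have "{1..r} \<inter> {r+1..h} = {}" by auto
    then show ?thesis using prcomp[of "{1..r}" "{r+1..h}" x] r_le_h by (simp add: Pv Qv pr0)
  qed
  have QPv: "Q *v (P *v x) = 0" for x
  proof -
    have "{r+1..h} \<inter> {1..r} = {}" by auto
    then show ?thesis using prcomp[of "{r+1..h}" "{1..r}" x] r_le_h by (simp add: Pv Qv pr0)
  qed
  have PNv: "P *v (N *v x) = 0" for x
    by (simp add: Nv matrix_vector_mult_diff_distrib PPv PQv)
  have QNv: "Q *v (N *v x) = 0" for x
    by (simp add: Nv matrix_vector_mult_diff_distrib QQv QPv)
  have NNv: "N *v (N *v x) = N *v x" for x
    using PNv QNv by (simp add: Nv[of "N *v x"])
  have PP: "P ** P = P" by (simp add: matrix_eq mv[symmetric] PPv)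
  have QQ: "Q ** Q = Q" by (simp add: matrix_eq mv[symmetric] QQv)
  have NN: "N ** N = N" by (simp add: matrix_eq mv[symmetric] NNv)
  have PQ: "P ** Q = 0" by (simp add: matrix_eq mv[symmetric] PQv)
  have QN: "Q ** N = 0" by (simp add: matrix_eq mv[symmetric] QNv)
  have PN: "P ** N = 0" by (simp add: matrix_eq mv[symmetric] PNv)
  have sum1: "P + Q + N = mat 1" by (simp add: N_def)
  have Gpsd: "x \<bullet> (Gam i *v x) \<ge> 0" for i x by (simp add: Gam_def emp_cov_psd)
  have Gsym: "(Gam i *v x) \<bullet> z = x \<bullet> (Gam i *v z)" for i x z by (simp add: Gam_def emp_cov_sym)
  have Gzero: "Gam i *v x = 0" if "x \<bullet> (Gam i *v x) = 0" for i x
    using that by (simp add: Gam_def emp_cov_zero)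
  have GT: "transpose (Gam i) = Gam i" for i by (simp add: Gam_def emp_cov_transpose)
  have inv: "\<forall>k\<in>{1..h}. \<exists>c. Gam i *v a k = c *\<^sub>R u k" for i
  proof (induction i)
    case 0
    show ?case
    proof
      fix k assume k: "k \<in> {1..h}"
      show "\<exists>c. Gam 0 *v a k = c *\<^sub>R u k"
      proof (cases "k \<le> r")
        case True
        then have dpos: "\<delta> k 0 > 0" using w_pos k by auto
        have "Gam 0 *v a k = \<delta> k 0 *\<^sub>R u k"
          using True dpos by (simp add: u_def a_def Gam_def mv)
        then show ?thesis by blast
      next
        case False
        then have d0: "\<delta> k 0 = 0" using w_zero k by auto
        have "a k \<bullet> (Gam 0 *v a k) = w k \<bullet> ((H ** emp_cov (v 0) ** ?Ht) *v w k)"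
          by (simp add: a_def dotHt Gam_def mv matrix_mul_assoc)
        also have "\<dots> = 0" using w_eig[of k 0] k n_h d0 by auto
        finally have "Gam 0 *v a k = 0" by (rule Gzero)
        then show ?thesis by (metis scaleR_zero_left)
      qed
    qed
  next
    case (Suc i)
    define S where "S = H ** Gam i ** ?Ht + Sig"
    define Si where "Si = matrix_inv S"
    define K where "K = Gam i ** ?Ht ** Si"
    define Gm where "Gm = mat 1 - K ** H"
    have EKI': "v (Suc i) j = Gm *v v i j + K *v y" for j
      using EKI[of i j]
      by (simp add: Gm_def K_def S_def Si_def Gam_def matrix_vector_mult_diff_rdistrib
          matrix_vector_mult_diff_distrib mv algebra_simps)
    have Gsuc: "Gam (Suc i) = Gm ** Gam i ** transpose Gm"
      using emp_cov_affine[of "v (Suc i)" Gm "v i" "K *v y"] EKI' by (simp add: Gam_def)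
    have Sv: "S *v x = H *v (Gam i *v (?Ht *v x)) + Sig *v x" for x
      by (simp add: S_def matrix_vector_mult_add_rdistrib mv matrix_mul_assoc)
    have Spd: "x \<bullet> (S *v x) > 0" if "x \<noteq> 0" for x
    proof -
      have "x \<bullet> (H *v (Gam i *v (?Ht *v x))) = (?Ht *v x) \<bullet> (Gam i *v (?Ht *v x))"
        by (simp add: dotHt)
      then have "x \<bullet> (H *v (Gam i *v (?Ht *v x))) \<ge> 0" using Gpsd by simp
      then show ?thesis using Sigpd[OF that] by (simp add: Sv inner_add_right)
    qed
    have Sinj: "x = 0" if "S *v x = 0" for x
      using Spd[of x] that by (cases "x = 0") auto
    have SSi1: "S ** Si = mat 1" and SSi2: "Si ** S = mat 1"
      using inv_facts[of S] Sinj Si_def by auto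
    have ST: "transpose S = S"
      by (simp add: S_def transpose_add matrix_transpose_mul SigT GT matrix_mul_assoc)
    have SiT: "transpose Si = Si" using inv_sym[OF SSi1 SSi2 ST] .
    have GmT: "transpose Gm = mat 1 - ?Ht ** Si ** H ** Gam i"
      by (simp add: Gm_def K_def transpose_diff matrix_transpose_mul SiT GT matrix_mul_assoc)
    show ?case
    proof
      fix k assume k: "k \<in> {1..h}"
      obtain c where c: "Gam i *v a k = c *\<^sub>R u k" using Suc.IH k by blast
      have c': "Gam i *v (?Ht *v w k) = c *\<^sub>R u k" using c by (simp add: a_def)
      have wne: "w k \<noteq> 0" using wSw[OF k k] by auto
      have Sw: "S *v w k = (1 + c) *\<^sub>R (Sig *v w k)"
        using c' Hu[OF k] by (simp add: Sv matrix_vector_mult_scaleR algebra_simps)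
      have "w k \<bullet> (S *v w k) = 1 + c"
        using wSw[OF k k] by (simp add: Sw)
      then have cpos: "1 + c > 0" using Spd[OF wne] by simp
      have SiSw: "Si *v (Sig *v w k) = (1 / (1 + c)) *\<^sub>R w k"
      proof -
        have "w k = Si *v (S *v w k)" using SSi2 by (simp add: mv)
        also have "\<dots> = (1 + c) *\<^sub>R (Si *v (Sig *v w k))" by (simp add: Sw matrix_vector_mult_scaleR)
        finally have wz: "w k = (1 + c) *\<^sub>R (Si *v (Sig *v w k))" .
        have "(1 / (1 + c)) *\<^sub>R w k = (1 / (1 + c)) *\<^sub>R ((1 + c) *\<^sub>R (Si *v (Sig *v w k)))"
          using wz by (rule arg_cong)
        also have "\<dots> = ((1 / (1 + c)) * (1 + c)) *\<^sub>R (Si *v (Sig *v w k))"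
          by (simp only: scaleR_scaleR)
        also have "\<dots> = Si *v (Sig *v w k)" using cpos by simp
        finally show ?thesis by simp
      qed
      define s where "s = 1 - c / (1 + c)"
      have GmTa: "transpose Gm *v a k = s *\<^sub>R a k"
      proof -
        have "transpose Gm *v a k = a k - ?Ht *v (Si *v (H *v (Gam i *v a k)))"
          by (simp add: GmT matrix_vector_mult_diff_rdistrib mv matrix_mul_assoc)
        also have "\<dots> = a k - (c / (1 + c)) *\<^sub>R a k"
          by (simp add: c' Hu[OF k] matrix_vector_mult_scaleR SiSw a_def)
        finally show ?thesis by (simp add: s_def algebra_simps)
      qed
      have Gmu: "Gm *v u k = s *\<^sub>R u k"
      proof -
        have "Gm *v u k = u k - Gam i *v (?Ht *v (Si *v (H *v u k)))"
          by (simp add: Gm_def K_def matrix_vector_mult_diff_rdistrib mv matrix_mul_assoc)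
        also have "\<dots> = u k - (c / (1 + c)) *\<^sub>R u k"
          by (simp add: Hu[OF k] SiSw matrix_vector_mult_scaleR c')
        finally show ?thesis by (simp add: s_def algebra_simps)
      qed
      have "Gam (Suc i) *v a k = Gm *v (Gam i *v (transpose Gm *v a k))"
        by (simp add: Gsuc mv matrix_mul_assoc)
      also have "\<dots> = (s * c * s) *\<^sub>R u k"
        by (simp add: GmTa matrix_vector_mult_scaleR c Gmu)
      finally show "\<exists>c. Gam (Suc i) *v a k = c *\<^sub>R u k" by blast
    qed
  qed
  have comm: "M i ** P = P ** M i \<and> M i ** Q = Q ** M i \<and> M i ** N = N ** M i" for i
  proof -
    obtain c where c: "\<And>k. k \<in> {1..h} \<Longrightarrow> Gam i *v a k = c k *\<^sub>R u k"
      using inv[of i] by metis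
    define X where "X = Gam i ** A"
    have Xpr: "X *v (pr K x) = pr K (X *v x)" if K: "K \<subseteq> {1..h}" for K x
    proof -
      have "X *v pr K x = (\<Sum>k\<in>K. (a k \<bullet> x) *\<^sub>R (X *v u k))"
        by (simp add: pr_def mulv_sum matrix_vector_mult_scaleR)
      also have "\<dots> = (\<Sum>k\<in>K. (a k \<bullet> x) *\<^sub>R (c k *\<^sub>R u k))"
        using K by (intro sum.cong refl) (auto simp: X_def mv[symmetric] Au c)
      also have "\<dots> = pr K (X *v x)"
        unfolding pr_def
      proof (intro sum.cong refl)
        fix k assume "k \<in> K"
        then have k: "k \<in> {1..h}" using K by auto
        have "a k \<bullet> (X *v x) = (Gam i *v a k) \<bullet> (A *v x)"
          by (simp add: X_def mv[symmetric] Gsym)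
        also have "\<dots> = c k * (a k \<bullet> x)" by (simp add: c[OF k] uA[OF k])
        finally show "(a k \<bullet> x) *\<^sub>R (c k *\<^sub>R u k) = (a k \<bullet> (X *v x)) *\<^sub>R u k"
          by (simp add: mult.commute)
      qed
      finally show ?thesis .
    qed
    define Y where "Y = mat 1 + X"
    have Yv: "Y *v x = x + X *v x" for x by (simp add: Y_def matrix_vector_mult_add_rdistrib)
    have Yinj: "x = 0" if "Y *v x = 0" for x
    proof -
      have "x + Gam i *v (A *v x) = 0" using that by (simp add: Yv X_def mv)
      then have xe: "x = - (Gam i *v (A *v x))" by (simp add: eq_neg_iff_add_eq_0)
      have "x \<bullet> (A *v x) = (A *v x) \<bullet> x" by (simp add: inner_commute)
      also have "\<dots> = - ((A *v x) \<bullet> (Gam i *v (A *v x)))"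
        using arg_cong[OF xe, of "\<lambda>z. (A *v x) \<bullet> z"] by simp
      finally have "x \<bullet> (A *v x) \<le> 0" using Gpsd[where i=i and x="A *v x"] by simp
      then have "(H *v x) \<bullet> (Sinv *v (H *v x)) = 0"
        using Aquad[of x] Sinv_nonneg[of "H *v x"] by simp
      then have "H *v x = 0" by (rule Sinv_zero)
      then have "A *v x = 0" by (simp add: Av)
      then show ?thesis using xe by simp
    qed
    have MY: "M i = matrix_inv Y" by (simp add: M_def Y_def X_def A_def Gam_def matrix_mul_assoc)
    have YM1: "Y ** M i = mat 1" and YM2: "M i ** Y = mat 1"
      using inv_facts[of Y] Yinj MY by auto
    have YPv: "Y *v (P *v x) = P *v (Y *v x)" for x
      using Xpr[of "{1..r}" x] r_le_h by (simp add: Yv Pv pr_def[symmetric] matrix_vector_right_distrib)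
    have YQv: "Y *v (Q *v x) = Q *v (Y *v x)" for x
      using Xpr[of "{r+1..h}" x] by (simp add: Yv Qv pr_def[symmetric] matrix_vector_right_distrib)
    have YNv: "Y *v (N *v x) = N *v (Y *v x)" for x
      by (simp add: Nv matrix_vector_mult_diff_distrib YPv YQv)
    have YP: "Y ** P = P ** Y" by (simp add: matrix_eq mv[symmetric] YPv)
    have YQ: "Y ** Q = Q ** Y" by (simp add: matrix_eq mv[symmetric] YQv)
    have YN: "Y ** N = N ** Y" by (simp add: matrix_eq mv[symmetric] YNv)
    show ?thesis using comm_inv[OF YM1 YM2 YP] comm_inv[OF YM1 YM2 YQ] comm_inv[OF YM1 YM2 YN]
      by blast
  qed
  show ?thesis using comm PP QQ NN PQ QN PN sum1 by blast
qed

end
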